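(* Let $L\le R$ be finite and let $C=A_N+W$ be a corner-modified BBT matrix on $\mathcal V_{L,R}$, with $A_N=\mathbf P_{L,R}\mathbf A|_{\mathcal V_{L,R}}$ of bandwidth $(p,q)$ and $W$ a corner modification for bandwidth $(p,q)$. Let $\kappa\in\mathbb N$ with $2(R-L)>\kappa(q-p)$. Then $C^\kappa=A_N^{(\kappa)}+W_\kappa$, where $A_N^{(\kappa)}=\mathbf P_{L,R}\mathbf A^\kappa|_{\mathcal V_{L,R}}$ and $W_\kappa$ is a corner modification for bandwidth $(\kappa p,\kappa q)$.
   Context: Fix $d\ge1$. $\mathcal V^S_d$: doubly infinite sequences $\{\psi_j\}_{j\in\mathbb Z}$, $\psi_j\in\mathbb C^d$. A matrix Laurent polynomial of bandwidth $(p,q)$ is $\sum_{r=p}^qa_rw^r$, integers $p\le q$, $a_r$ complex $d\times d$, $a_p\ne0\ne a_q$; its BBL transformation is $(\mathbf A\Psi)_j=\sum_ra_r\psi_{j+r}$. $\mathcal V_{L,R}$ = sequences with $\psi_j=0$ for $j\notin[L,R]$; $\mathbf P_{L,R}$ zeroes entries outside $[L,R]$. For integers $p\le q$, the bulk projector for bandwidth $(p,q)$ on $\mathcal V_{L,R}$ is $P_B=\mathbf P_{L-\min(p,0),R-\max(0,q)}|_{\mathcal V_{L,R}}$; a corner modification for bandwidth $(p,q)$ is any linear map $W$ on $\mathcal V_{L,R}$ with $P_BW=0$; a corner-modified BBT matrix is $A_N+W$ with $A_N=\mathbf P_{L,R}\mathbf A|_{\mathcal V_{L,R}}$. *)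

theory Defs
  imports "HOL-Analysis.Analysis"
begin

text \<open>Sequences in V^S_d: doubly infinite sequences of vectors in C^d; d is the
  cardinality of the finite index type 'd.\<close>
type_synonym 'd seqv = "int \<Rightarrow> complex ^ 'd"

text \<open>A matrix Laurent polynomial is given by its coefficient function
  a :: int => d x d matrix; bandwidth (p,q).\<close>
definition bandwidth :: "(int \<Rightarrow> complex ^ ('d::finite) ^ 'd) \<Rightarrow> int \<Rightarrow> int \<Rightarrow> bool" where
  "bandwidth a p q \<longleftrightarrow> p \<le> q \<and> a p \<noteq> 0 \<and> a q \<noteq> 0 \<and> (\<forall>r. (r < p \<or> q < r) \<longrightarrow> a r = 0)"

definition bbl :: "(int \<Rightarrow> complex ^ ('d::finite) ^ 'd) \<Rightarrow> ('d::finite) seqv \<Rightarrow> ('d::finite) seqv" where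
  "bbl a \<psi> = (\<lambda>j. \<Sum>r\<in>{r. a r \<noteq> 0}. a r *v \<psi> (j + r))"

definition VLR :: "int \<Rightarrow> int \<Rightarrow> ('d::finite) seqv set" where
  "VLR L R = {\<psi>. \<forall>j. (j < L \<or> R < j) \<longrightarrow> \<psi> j = 0}"

definition PLR :: "int \<Rightarrow> int \<Rightarrow> ('d::finite) seqv \<Rightarrow> ('d::finite) seqv" where
  "PLR L R \<psi> = (\<lambda>j. if L \<le> j \<and> j \<le> R then \<psi> j else 0)"

definition linear_on_VLR :: "int \<Rightarrow> int \<Rightarrow> (('d::finite) seqv \<Rightarrow> ('d::finite) seqv) \<Rightarrow> bool" where
  "linear_on_VLR L R W \<longleftrightarrow>
     (\<forall>\<psi>\<in>VLR L R. W \<psi> \<in> VLR L R) \<and>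
     (\<forall>\<psi>\<in>VLR L R. \<forall>\<phi>\<in>VLR L R. W (\<lambda>j. \<psi> j + \<phi> j) = (\<lambda>j. W \<psi> j + W \<phi> j)) \<and>
     (\<forall>\<psi>\<in>VLR L R. \<forall>c::complex. W (\<lambda>j. c *s \<psi> j) = (\<lambda>j. c *s W \<psi> j))"

definition bulk_proj :: "int \<Rightarrow> int \<Rightarrow> int \<Rightarrow> int \<Rightarrow> ('d::finite) seqv \<Rightarrow> ('d::finite) seqv" where
  "bulk_proj L R p q = PLR (L - min p 0) (R - max 0 q)"

definition corner_mod :: "int \<Rightarrow> int \<Rightarrow> int \<Rightarrow> int \<Rightarrow> (('d::finite) seqv \<Rightarrow> ('d::finite) seqv) \<Rightarrow> bool" where
  "corner_mod L R p q W \<longleftrightarrow> linear_on_VLR L R W \<and>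
     (\<forall>\<psi>\<in>VLR L R. bulk_proj L R p q (W \<psi>) = (\<lambda>j. 0))"

definition trunc :: "int \<Rightarrow> int \<Rightarrow> (('d::finite) seqv \<Rightarrow> ('d::finite) seqv) \<Rightarrow> ('d::finite) seqv \<Rightarrow> ('d::finite) seqv" where
  "trunc L R T \<psi> = PLR L R (T \<psi>)"

end

theory Submission
  imports Defs
begin

lemma scale_sum_vec: "(c::complex) *s sum f S = sum (\<lambda>x. c *s f x) S"
  by (simp add: vec_eq_iff sum_component sum_distrib_left)

lemma bbl_add: "bbl a (\<lambda>j. \<psi> j + \<phi> j) = (\<lambda>j. bbl a \<psi> j + bbl a \<phi> j)"
  unfolding bbl_def by (simp add: matrix_vector_right_distrib sum.distrib)

lemma bbl_scale: "bbl a (\<lambda>j. c *s \<psi> j) = (\<lambda>j. c *s bbl a \<psi> j)"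
  unfolding bbl_def by (simp add: vec.scale scale_sum_vec)

lemma bblpow_add: "(bbl a ^^ k) (\<lambda>j. \<psi> j + \<phi> j) = (\<lambda>j. (bbl a ^^ k) \<psi> j + (bbl a ^^ k) \<phi> j)"
  by (induction k) (simp_all add: bbl_add)

lemma bblpow_scale: "(bbl a ^^ k) (\<lambda>j. c *s \<psi> j) = (\<lambda>j. c *s (bbl a ^^ k) \<psi> j)"
  by (induction k) (simp_all add: bbl_scale)

lemma PLR_in: "PLR L R \<phi> \<in> VLR L R"
  unfolding PLR_def VLR_def by auto

lemma PLR_add: "PLR L R (\<lambda>j. \<psi> j + \<phi> j) = (\<lambda>j. PLR L R \<psi> j + PLR L R \<phi> j)"
  unfolding PLR_def by auto

lemma PLR_scale: "PLR L R (\<lambda>j. c *s \<psi> j) = (\<lambda>j. c *s PLR L R \<psi> j)"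
  unfolding PLR_def by auto

lemma VLR_add: "\<psi> \<in> VLR L R \<Longrightarrow> \<phi> \<in> VLR L R \<Longrightarrow> (\<lambda>j. \<psi> j + \<phi> j) \<in> VLR L R"
  unfolding VLR_def by auto

lemma VLR_scale: "\<psi> \<in> VLR L R \<Longrightarrow> (\<lambda>j. c *s \<psi> j) \<in> VLR L R"
  unfolding VLR_def by auto

definition C :: "(int \<Rightarrow> complex ^ ('d::finite) ^ 'd) \<Rightarrow> ('d seqv \<Rightarrow> 'd seqv) \<Rightarrow> int \<Rightarrow> int \<Rightarrow> 'd seqv \<Rightarrow> 'd seqv" where "C a W L R = (\<lambda>\<phi> j. trunc L R (bbl a) \<phi> j + W \<phi> j)"


context
  fixes a :: "int \<Rightarrow> complex ^ ('d::finite) ^ 'd"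
    and W :: "('d::finite) seqv \<Rightarrow> ('d::finite) seqv"
    and L R p q :: int
  assumes bw: "bandwidth a p q"
    and cm: "corner_mod L R p q W"
begin


abbreviation "CC \<equiv> C a W L R"

lemma lin: "linear_on_VLR L R W" using cm unfolding corner_mod_def by auto

lemma C_in: "\<phi> \<in> VLR L R \<Longrightarrow> CC \<phi> \<in> VLR L R"
  using lin PLR_in[of L R "bbl a \<phi>"] unfolding C_def[of a W L R] trunc_def linear_on_VLR_def
  by (intro VLR_add) auto

lemma Cpow_in: "\<phi> \<in> VLR L R \<Longrightarrow> (CC ^^ k) \<phi> \<in> VLR L R"
  by (induction k) (simp_all add: C_in)

lemma C_add: "\<psi> \<in> VLR L R \<Longrightarrow> \<phi> \<in> VLR L R \<Longrightarrow> CC (\<lambda>j. \<psi> j + \<phi> j) = (\<lambda>j. CC \<psi> j + CC \<phi> j)"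
  using lin unfolding C_def[of a W L R] trunc_def linear_on_VLR_def
  by (auto simp: bbl_add PLR_add algebra_simps)

lemma C_scale: "\<psi> \<in> VLR L R \<Longrightarrow> CC (\<lambda>j. c *s \<psi> j) = (\<lambda>j. c *s CC \<psi> j)"
  using lin unfolding C_def[of a W L R] trunc_def linear_on_VLR_def
  by (auto simp: bbl_scale PLR_scale vector_add_ldistrib)

lemma Cpow_add: "\<psi> \<in> VLR L R \<Longrightarrow> \<phi> \<in> VLR L R \<Longrightarrow> (CC ^^ k) (\<lambda>j. \<psi> j + \<phi> j) = (\<lambda>j. (CC ^^ k) \<psi> j + (CC ^^ k) \<phi> j)"
  by (induction k) (simp_all add: C_add Cpow_in)

lemma Cpow_scale: "\<psi> \<in> VLR L R \<Longrightarrow> (CC ^^ k) (\<lambda>j. c *s \<psi> j) = (\<lambda>j. c *s (CC ^^ k) \<psi> j)"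
  by (induction k) (simp_all add: C_scale Cpow_in)

lemma agree:
  assumes "\<psi> \<in> VLR L R"
  shows "\<forall>j. L - int k * min p 0 \<le> j \<and> j \<le> R - int k * max 0 q \<longrightarrow> (CC ^^ k) \<psi> j = (bbl a ^^ k) \<psi> j"
proof (induction k)
  case 0 then show ?case by simp
next
  case (Suc k)
  show ?case
  proof (intro allI impI)
    fix j assume j: "L - int (Suc k) * min p 0 \<le> j \<and> j \<le> R - int (Suc k) * max 0 q"
    have m1: "int k * min p 0 \<le> 0" by (simp add: mult_nonneg_nonpos)
    have m2: "int k * max 0 q \<ge> 0" by simp
    have s1: "int (Suc k) * min p 0 = min p 0 + int k * min p 0" "int (Suc k) * max 0 q = max 0 q + int k * max 0 q"
      by (simp_all add: algebra_simps)
    have jb: "L - min p 0 \<le> j \<and> j \<le> R - max 0 q" using j m1 m2 unfolding s1 by linarith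
    have jLR: "L \<le> j \<and> j \<le> R" using jb by auto
    let ?\<phi> = "(CC ^^ k) \<psi>"
    have "?\<phi> \<in> VLR L R" using assms Cpow_in by blast
    then have "bulk_proj L R p q (W ?\<phi>) = (\<lambda>j. 0)" using cm unfolding corner_mod_def by auto
    then have W0: "W ?\<phi> j = 0" using jb unfolding bulk_proj_def PLR_def by meson
    have supp: "{r. a r \<noteq> 0} \<subseteq> {p..q}" using bw unfolding bandwidth_def by force
    have eq: "\<forall>r\<in>{r. a r \<noteq> 0}. ?\<phi> (j+r) = (bbl a ^^ k) \<psi> (j+r)"
    proof
      fix r assume "r \<in> {r. a r \<noteq> 0}"
      then have r: "p \<le> r \<and> r \<le> q" using supp by auto
      have "L - int k * min p 0 \<le> j + r \<and> j + r \<le> R - int k * max 0 q"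
        using j r by (auto simp: algebra_simps)
      then show "?\<phi> (j + r) = (bbl a ^^ k) \<psi> (j + r)" using Suc by simp
    qed
    have "bbl a ?\<phi> j = bbl a ((bbl a ^^ k) \<psi>) j"
      unfolding bbl_def[of a "?\<phi>"] bbl_def[of a "(bbl a ^^ k) \<psi>"] using eq by (intro sum.cong) auto
    then show "(CC ^^ Suc k) \<psi> j = (bbl a ^^ Suc k) \<psi> j"
      using W0 jLR by (simp add: C_def[of a W L R] trunc_def PLR_def)
  qed
qed

end

theorem mainTheorem15:
  fixes a :: "int \<Rightarrow> complex ^ ('d::finite) ^ 'd"
    and W :: "('d::finite) seqv \<Rightarrow> ('d::finite) seqv"
    and L R p q :: int and \<kappa> :: nat
  assumes "L \<le> R"
    and "bandwidth a p q"
    and "corner_mod L R p q W"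
    and "2 * (R - L) > int \<kappa> * (q - p)"
  shows "\<exists>W\<kappa>. corner_mod L R (int \<kappa> * p) (int \<kappa> * q) W\<kappa> \<and>
           (\<forall>\<psi>\<in>VLR L R.
              ((\<lambda>\<phi> j. trunc L R (bbl a) \<phi> j + W \<phi> j) ^^ \<kappa>) \<psi>
              = (\<lambda>j. trunc L R (bbl a ^^ \<kappa>) \<psi> j + W\<kappa> \<psi> j))"
proof -
  note bw = assms(2) and cm = assms(3)
  let ?C = "C a W L R"
  have Cd: "(\<lambda>\<phi> j. trunc L R (bbl a) \<phi> j + W \<phi> j) = ?C" by (simp add: C_def[of a W L R])
  define Wk where "Wk = (\<lambda>\<psi> j. (?C ^^ \<kappa>) \<psi> j - trunc L R (bbl a ^^ \<kappa>) \<psi> j)"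
  have "corner_mod L R (int \<kappa> * p) (int \<kappa> * q) Wk"
    unfolding corner_mod_def linear_on_VLR_def
  proof (intro conjI ballI allI)
    fix \<psi> :: "'d seqv" assume \<psi>: "\<psi> \<in> VLR L R"
    have "(?C ^^ \<kappa>) \<psi> \<in> VLR L R" using Cpow_in[OF bw cm \<psi>] .
    then show "Wk \<psi> \<in> VLR L R"
      unfolding Wk_def trunc_def VLR_def PLR_def by auto
    fix c :: complex
    show "Wk (\<lambda>j. c *s \<psi> j) = (\<lambda>j. c *s Wk \<psi> j)"
      unfolding Wk_def trunc_def
      by (simp add: Cpow_scale[OF bw cm \<psi>] bblpow_scale PLR_scale vector_ssub_ldistrib)
  next
    fix \<psi> \<phi> :: "'d seqv" assume \<psi>: "\<psi> \<in> VLR L R" and \<phi>: "\<phi> \<in> VLR L R"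
    show "Wk (\<lambda>j. \<psi> j + \<phi> j) = (\<lambda>j. Wk \<psi> j + Wk \<phi> j)"
      unfolding Wk_def trunc_def
      by (simp add: Cpow_add[OF bw cm \<psi> \<phi>] Cpow_add[OF bw cm \<phi> \<psi>] bblpow_add PLR_add algebra_simps)
  next
    fix \<psi> :: "'d seqv" assume \<psi>: "\<psi> \<in> VLR L R"
    have ag: "\<forall>j. L - int \<kappa> * min p 0 \<le> j \<and> j \<le> R - int \<kappa> * max 0 q \<longrightarrow> (?C ^^ \<kappa>) \<psi> j = (bbl a ^^ \<kappa>) \<psi> j"
      using agree[OF bw cm \<psi>] .
    have e1: "min (int \<kappa> * p) 0 = int \<kappa> * min p 0"
      by (cases "p \<le> 0") (auto simp: mult_nonneg_nonpos mult_nonneg_nonneg min_def mult_le_0_iff)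
    have e2: "max 0 (int \<kappa> * q) = int \<kappa> * max 0 q"
      by (cases "q \<le> 0") (auto simp: mult_nonneg_nonpos mult_nonneg_nonneg max_def zero_le_mult_iff)
    have m1: "int \<kappa> * min p 0 \<le> 0" by (simp add: mult_nonneg_nonpos)
    have m2: "int \<kappa> * max 0 q \<ge> 0" by simp
    show "bulk_proj L R (int \<kappa> * p) (int \<kappa> * q) (Wk \<psi>) = (\<lambda>j. 0)"
    proof
      fix j
      show "bulk_proj L R (int \<kappa> * p) (int \<kappa> * q) (Wk \<psi>) j = 0"
      proof (cases "L - int \<kappa> * min p 0 \<le> j \<and> j \<le> R - int \<kappa> * max 0 q")
        case True
        then have "L \<le> j \<and> j \<le> R" using m1 m2 by linarith
        then show ?thesis using ag True unfolding bulk_proj_def e1 e2 PLR_def Wk_def trunc_def by simp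
      next
        case False
        then show ?thesis unfolding bulk_proj_def e1 e2 PLR_def by auto
      qed
    qed
  qed
  moreover have "\<forall>\<psi>\<in>VLR L R. (?C ^^ \<kappa>) \<psi> = (\<lambda>j. trunc L R (bbl a ^^ \<kappa>) \<psi> j + Wk \<psi> j)"
    unfolding Wk_def by simp
  ultimately show ?thesis unfolding Cd by blast
qed

end
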